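(* Let $E\subseteq\mathbb{R}$ and let $f:E\to\mathbb{R}$ be Abel continuous on $E$. Then $f$ is statistically continuous on $E$.
   Context: A sequence $(p_n)$ of real numbers is Abel convergent to $\ell$ if $\sum_{k=0}^{\infty}p_k x^k$ converges for every $0\le x<1$ and $\lim_{x\to 1^-}(1-x)\sum_{k=0}^{\infty}p_k x^k=\ell$. $f$ is Abel continuous on $E$ if for every sequence $(p_n)$ in $E$ Abel convergent to some $\ell\in E$, $(f(p_n))$ is Abel convergent to $f(\ell)$. A sequence $(p_k)$ is statistically convergent to $\ell$ if for every $\varepsilon>0$, $\lim_{n\to\infty}\frac1n|\{k\le n:|p_k-\ell|\ge\varepsilon\}|=0$. $f$ is statistically continuous on $E$ if for every sequence $(p_n)$ in $E$ statistically convergent to some $\ell\in E$, the sequence $(f(p_n))$ is statistically convergent to $f(\ell)$. *)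

theory Defs
  imports "HOL-Analysis.Analysis"
begin

definition abel_convergent :: "(nat \<Rightarrow> real) \<Rightarrow> real \<Rightarrow> bool" where
  "abel_convergent p l \<longleftrightarrow>
     (\<forall>x::real. 0 \<le> x \<and> x < 1 \<longrightarrow> summable (\<lambda>k. p k * x ^ k)) \<and>
     ((\<lambda>x. (1 - x) * (\<Sum>k. p k * x ^ k)) \<longlongrightarrow> l) (at_left 1)"

definition abel_continuous :: "real set \<Rightarrow> (real \<Rightarrow> real) \<Rightarrow> bool" where
  "abel_continuous E f \<longleftrightarrow>
     (\<forall>p l. (\<forall>n. p n \<in> E) \<and> l \<in> E \<and> abel_convergent p l
        \<longrightarrow> abel_convergent (\<lambda>n. f (p n)) (f l))"

definition stat_convergent :: "(nat \<Rightarrow> real) \<Rightarrow> real \<Rightarrow> bool" where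
  "stat_convergent p l \<longleftrightarrow>
     (\<forall>\<epsilon>>0. (\<lambda>n. real (card {k. k \<le> n \<and> \<bar>p k - l\<bar> \<ge> \<epsilon>}) / real n) \<longlonglongrightarrow> 0)"

definition stat_continuous :: "real set \<Rightarrow> (real \<Rightarrow> real) \<Rightarrow> bool" where
  "stat_continuous E f \<longleftrightarrow>
     (\<forall>p l. (\<forall>n. p n \<in> E) \<and> l \<in> E \<and> stat_convergent p l
        \<longrightarrow> stat_convergent (\<lambda>n. f (p n)) (f l))"

end

theory Submission
  imports Defs "HOL-Library.Infinite_Set"
begin

lemma abel_fast:
  fixes q :: "nat \<Rightarrow> real"
  assumes b: "\<And>k. \<bar>q k - l\<bar> \<le> (1/2)^k"
  shows "abel_convergent q l"
proof -
  have sg: "summable (\<lambda>k. (1/2::real)^k)" by (rule summable_geometric) simp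
  have sd: "summable (\<lambda>k. (q k - l) * x ^ k)" and bd: "\<bar>\<Sum>k. (q k - l) * x ^ k\<bar> \<le> 2"
    if x: "0 \<le> x" "x < 1" for x :: real
  proof -
    have le: "norm ((q k - l) * x ^ k) \<le> (1/2)^k" for k
    proof -
      have "norm ((q k - l) * x ^ k) = \<bar>q k - l\<bar> * x ^ k" using x by (simp add: abs_mult)
      also have "\<dots> \<le> (1/2)^k * 1" using b[of k] x
        by (intro mult_mono) (auto simp: power_le_one)
      finally show ?thesis by simp
    qed
    have sn: "summable (\<lambda>k. norm ((q k - l) * x ^ k))"
      by (rule summable_comparison_test[OF _ sg]) (use le in auto)
    show "summable (\<lambda>k. (q k - l) * x ^ k)"
      by (rule summable_norm_cancel[OF sn])
    have "norm (\<Sum>k. (q k - l) * x ^ k) \<le> (\<Sum>k. norm ((q k - l) * x ^ k))"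
      by (rule summable_norm[OF sn])
    also have "\<dots> \<le> (\<Sum>k. (1/2::real)^k)"
      by (rule suminf_le[OF le sn sg])
    also have "\<dots> = 2" by (subst suminf_geometric) auto
    finally show "\<bar>\<Sum>k. (q k - l) * x ^ k\<bar> \<le> 2" by simp
  qed
  have sgx: "summable (\<lambda>k. x ^ k)" and sumx: "(\<Sum>k. x^k) = 1/(1-x)"
    if "0 \<le> x" "x < 1" for x :: real
    using that by (auto intro!: summable_geometric suminf_geometric)
  have sq: "summable (\<lambda>k. q k * x ^ k)" if x: "0 \<le> x" "x < 1" for x :: real
  proof -
    have "summable (\<lambda>k. (q k - l) * x ^ k + l * x ^ k)"
      using sd[OF x] summable_mult[OF sgx[OF x], of l] by (intro summable_add) auto
    then show ?thesis by (simp add: algebra_simps)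
  qed
  have eq: "(1 - x) * (\<Sum>k. q k * x ^ k) - l = (1 - x) * (\<Sum>k. (q k - l) * x ^ k)"
    if x: "0 \<le> x" "x < 1" for x :: real
  proof -
    have "(\<Sum>k. (q k - l) * x ^ k) = (\<Sum>k. q k * x ^ k - l * x ^ k)"
      by (simp add: algebra_simps)
    also have "\<dots> = (\<Sum>k. q k * x ^ k) - (\<Sum>k. l * x ^ k)"
      using sq[OF x] summable_mult[OF sgx[OF x], of l] by (simp add: suminf_diff)
    also have "(\<Sum>k. l * x ^ k) = l / (1 - x)"
      using suminf_mult[OF sgx[OF x], of l] sumx[OF x] by simp
    finally show ?thesis using x by (simp add: field_simps)
  qed
  have "((\<lambda>x. (1 - x) * (\<Sum>k. q k * x ^ k) - l) \<longlongrightarrow> 0) (at_left 1)"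
  proof (rule Lim_null_comparison)
    show "eventually (\<lambda>x. norm ((1 - x) * (\<Sum>k. q k * x ^ k) - l) \<le> 2 * (1 - x)) (at_left (1::real))"
    proof -
      have ev: "eventually (\<lambda>x. x \<in> {0<..<1}) (at_left (1::real))"
        by (rule eventually_at_left_real) simp
      show ?thesis using ev
    proof (rule eventually_mono)
      fix x :: real assume x: "x \<in> {0<..<1}"
      then have "norm ((1 - x) * (\<Sum>k. q k * x ^ k) - l) = (1 - x) * \<bar>\<Sum>k. (q k - l) * x ^ k\<bar>"
        using eq[of x] by (simp add: abs_mult)
      also have "\<dots> \<le> (1 - x) * 2" using x bd[of x] by (intro mult_left_mono) auto
      finally show "norm ((1 - x) * (\<Sum>k. q k * x ^ k) - l) \<le> 2 * (1 - x)" by simp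
    qed
    qed
    show "((\<lambda>x. 2 * (1 - x)) \<longlongrightarrow> 0) (at_left (1::real))"
    proof -
      have "((\<lambda>x. 1 - x) \<longlongrightarrow> 1 - 1) (at_left (1::real))"
        by (intro tendsto_diff tendsto_const tendsto_ident_at)
      then have "((\<lambda>x. 2 * (1 - x)) \<longlongrightarrow> 2 * (1 - 1)) (at_left (1::real))"
        by (rule tendsto_mult_left)
      then show ?thesis by simp
    qed
  qed
  then have "((\<lambda>x. (1 - x) * (\<Sum>k. q k * x ^ k) - l + l) \<longlongrightarrow> 0 + l) (at_left 1)"
    by (intro tendsto_add) auto
  then show ?thesis unfolding abel_convergent_def using sq by simp
qed


lemma abel_contra:
  fixes f :: "real \<Rightarrow> real" and y :: "nat \<Rightarrow> real"
  assumes ac: "abel_continuous E f" and l: "l \<in> E" and e: "\<epsilon> > 0"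
    and yE: "\<And>n. y n \<in> E" and yb: "\<And>n. \<bar>y n - l\<bar> \<le> (1/2)^n"
    and S: "infinite S" and yS: "\<And>n. n \<in> S \<Longrightarrow> s * (f (y n) - f l) \<ge> \<epsilon>"
  shows False
proof -
  define q where "q k = y (enumerate S k)" for k
  have qE: "\<forall>k. q k \<in> E" using yE by (simp add: q_def)
  have qb: "\<bar>q k - l\<bar> \<le> (1/2)^k" for k
  proof -
    have "\<bar>q k - l\<bar> \<le> (1/2)^(enumerate S k)" using yb by (simp add: q_def)
    also have "\<dots> \<le> (1/2::real)^k"
      by (rule power_decreasing) (use le_enumerate[OF S, of k] in auto)
    finally show ?thesis .
  qed
  have qs: "s * (f (q k) - f l) \<ge> \<epsilon>" for k
    unfolding q_def by (rule yS) (rule enumerate_in_set[OF S])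
  have "abel_convergent q l" by (rule abel_fast) (rule qb)
  then have "abel_convergent (\<lambda>n. f (q n)) (f l)"
    using ac l qE unfolding abel_continuous_def by blast
  then have sm: "\<And>x. 0 \<le> x \<Longrightarrow> x < 1 \<Longrightarrow> summable (\<lambda>k. f (q k) * x ^ k)"
    and lim: "((\<lambda>x. (1 - x) * (\<Sum>k. f (q k) * x ^ k)) \<longlongrightarrow> f l) (at_left 1)"
    unfolding abel_convergent_def by auto
  have lim2: "((\<lambda>x. s * ((1 - x) * (\<Sum>k. f (q k) * x ^ k) - f l)) \<longlongrightarrow> s * (f l - f l)) (at_left 1)"
    by (intro tendsto_mult tendsto_diff lim tendsto_const)
  have ev0: "eventually (\<lambda>x. x \<in> {0<..<1}) (at_left (1::real))"
    by (rule eventually_at_left_real) simp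
  have ev: "eventually (\<lambda>x. \<epsilon> \<le> s * ((1 - x) * (\<Sum>k. f (q k) * x ^ k) - f l)) (at_left 1)"
    using ev0
  proof (rule eventually_mono)
    fix x :: real assume x: "x \<in> {0<..<1}"
    define T where "T = (\<Sum>k. f (q k) * x ^ k)"
    have sT: "(\<lambda>k. f (q k) * x ^ k) sums T"
      unfolding T_def using sm[of x] x by (intro summable_sums) auto
    have sG: "(\<lambda>k. x ^ k) sums (1 / (1 - x))"
      by (rule geometric_sums) (use x in auto)
    have s1: "(\<lambda>k. s * (f (q k) * x ^ k) - (s * f l) * x ^ k) sums (s * T - (s * f l) * (1 / (1 - x)))"
      by (intro sums_diff sums_mult sT sG)
    have s2: "(\<lambda>k. \<epsilon> * x ^ k) sums (\<epsilon> * (1 / (1 - x)))"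
      by (intro sums_mult sG)
    have le: "\<epsilon> * x ^ k \<le> s * (f (q k) * x ^ k) - (s * f l) * x ^ k" for k
    proof -
      have "\<epsilon> * x ^ k \<le> (s * (f (q k) - f l)) * x ^ k"
        by (rule mult_right_mono[OF qs]) (use x in auto)
      then show ?thesis by (simp add: algebra_simps)
    qed
    have "\<epsilon> * (1 / (1 - x)) \<le> s * T - (s * f l) * (1 / (1 - x))"
      by (rule sums_le[OF _ s2 s1]) (use le in auto)
    then have "(1 - x) * (\<epsilon> * (1 / (1 - x))) \<le> (1 - x) * (s * T - (s * f l) * (1 / (1 - x)))"
      by (rule mult_left_mono) (use x in auto)
    moreover have "(1 - x) * (\<epsilon> * (1 / (1 - x))) = \<epsilon>" using x by simp
    moreover have "(1 - x) * (s * T - (s * f l) * (1 / (1 - x))) = s * ((1 - x) * T - f l)"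
    proof -
      have "(1 - x) * ((s * f l) * (1 / (1 - x))) = s * f l" using x by simp
      then show ?thesis by (simp add: right_diff_distrib algebra_simps)
    qed
    ultimately show "\<epsilon> \<le> s * ((1 - x) * T - f l)" by simp
  qed
  have "\<epsilon> \<le> s * (f l - f l)"
    by (rule tendsto_le[OF _ lim2 tendsto_const ev]) simp
  then show False using e by simp
qed


lemma abel_cont_eps:
  fixes f :: "real \<Rightarrow> real"
  assumes ac: "abel_continuous E f" and l: "l \<in> E" and e: "\<epsilon> > 0"
  shows "\<exists>\<delta>>0. \<forall>y\<in>E. \<bar>y - l\<bar> < \<delta> \<longrightarrow> \<bar>f y - f l\<bar> < \<epsilon>"
proof (rule ccontr)
  assume H: "\<not> ?thesis"
  have "\<exists>y. y \<in> E \<and> \<bar>y - l\<bar> < (1/2)^n \<and> \<bar>f y - f l\<bar> \<ge> \<epsilon>" for n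
  proof -
    have H': "\<forall>\<delta>>0. \<exists>y\<in>E. \<bar>y - l\<bar> < \<delta> \<and> \<epsilon> \<le> \<bar>f y - f l\<bar>"
      using H by (metis not_less not_le)
    have "(1/2::real)^n > 0" by simp
    then obtain y where "y \<in> E" "\<bar>y - l\<bar> < (1/2)^n" "\<epsilon> \<le> \<bar>f y - f l\<bar>"
      using H' by blast
    then show ?thesis by blast
  qed
  then obtain y where y: "\<And>n. y n \<in> E \<and> \<bar>y n - l\<bar> < (1/2)^n \<and> \<bar>f (y n) - f l\<bar> \<ge> \<epsilon>"
    by metis
  define A where "A = {n. 1 * (f (y n) - f l) \<ge> \<epsilon>}"
  define B where "B = {n. (-1) * (f (y n) - f l) \<ge> \<epsilon>}"
  have "A \<union> B = UNIV"
  proof -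
    have "n \<in> A \<or> n \<in> B" for n using y[of n] by (auto simp: A_def B_def abs_if split: if_splits)
    then show ?thesis by auto
  qed
  then have "infinite A \<or> infinite B" by (metis finite_Un infinite_UNIV_nat)
  then obtain s :: real where inf: "infinite {n. s * (f (y n) - f l) \<ge> \<epsilon>}"
    unfolding A_def B_def by blast
  show False
    by (rule abel_contra[OF ac l e _ _ inf, of y]) (use y in \<open>auto simp: less_imp_le\<close>)
qed

theorem corollary2:
  fixes E :: "real set" and f :: "real \<Rightarrow> real"
  assumes "abel_continuous E f"
  shows "stat_continuous E f"
  unfolding stat_continuous_def
proof (intro allI impI)
  fix p l assume H: "(\<forall>n. p n \<in> E) \<and> l \<in> E \<and> stat_convergent p l"
  then have pE: "\<And>n. p n \<in> E" and l: "l \<in> E" and sc: "stat_convergent p l" by auto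
  show "stat_convergent (\<lambda>n. f (p n)) (f l)"
    unfolding stat_convergent_def
  proof (intro allI impI)
    fix \<epsilon> :: real assume e: "\<epsilon> > 0"
    obtain \<delta> where d: "\<delta> > 0" and dH: "\<And>y. y \<in> E \<Longrightarrow> \<bar>y - l\<bar> < \<delta> \<Longrightarrow> \<bar>f y - f l\<bar> < \<epsilon>"
      using abel_cont_eps[OF assms l e] by blast
    have lim: "(\<lambda>n. real (card {k. k \<le> n \<and> \<bar>p k - l\<bar> \<ge> \<delta>}) / real n) \<longlonglongrightarrow> 0"
      using sc d unfolding stat_convergent_def by blast
    show "(\<lambda>n. real (card {k. k \<le> n \<and> \<bar>f (p k) - f l\<bar> \<ge> \<epsilon>}) / real n) \<longlonglongrightarrow> 0"
    proof (rule Lim_null_comparison[OF _ lim])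
      show "\<forall>\<^sub>F n in sequentially. norm (real (card {k. k \<le> n \<and> \<bar>f (p k) - f l\<bar> \<ge> \<epsilon>}) / real n)
              \<le> real (card {k. k \<le> n \<and> \<bar>p k - l\<bar> \<ge> \<delta>}) / real n"
      proof (rule always_eventually, rule allI)
        fix n :: nat
        have sub: "{k. k \<le> n \<and> \<bar>f (p k) - f l\<bar> \<ge> \<epsilon>} \<subseteq> {k. k \<le> n \<and> \<bar>p k - l\<bar> \<ge> \<delta>}"
          using dH pE by (force simp: not_le[symmetric])
        have fin: "finite {k. k \<le> n \<and> \<bar>p k - l\<bar> \<ge> \<delta>}"
          by (rule finite_subset[of _ "{..n}"]) auto
        have "card {k. k \<le> n \<and> \<bar>f (p k) - f l\<bar> \<ge> \<epsilon>} \<le> card {k. k \<le> n \<and> \<bar>p k - l\<bar> \<ge> \<delta>}"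
          by (rule card_mono[OF fin sub])
        then show "norm (real (card {k. k \<le> n \<and> \<bar>f (p k) - f l\<bar> \<ge> \<epsilon>}) / real n)
              \<le> real (card {k. k \<le> n \<and> \<bar>p k - l\<bar> \<ge> \<delta>}) / real n"
          by (simp add: divide_right_mono)
      qed
    qed
  qed
qed

end
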